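(* Let $B$ be a non-abelian group, $H$ a finitely generated infinite group with fixed finite generating set $X=\{x_1,\dots,x_n\}$, $W=B\wr H$, and fix $a,b\in B$ with $ab\ne ba$. For $S\subseteq H$ define $\bar a,\bar b_S\in B^H$ by $\bar a(1)=a$, $\bar a(x)=1$ for $x\neq1$, and $\bar b_S(x)=b$ for $x\in S$, $\bar b_S(x)=1$ for $x\notin S$; let $G_S\le W$ be the subgroup generated by $H$, $\bar a$, $\bar b_S$, and $Y_S=(x_1,\dots,x_n,\bar a,\bar b_S)$. Then the map $\xi:2^H\to\mathcal G$, $\xi(S)=(G_S,Y_S)$, is injective.
   Context: $B^H$ is the group of all functions $H\to B$ with pointwise multiplication; $B\wr H=B^H\rtimes H$ with $(hfh^{-1})(x)=f(h^{-1}x)$. $2^H$ is the set of subsets of $H$. $\mathcal G$ is the space of finitely generated marked groups: pairs $(G,A)$ with $A$ a finite ordered generating tuple of $G$, where $(G,(a_1,\dots,a_m))\approx(G',(a'_1,\dots,a'_m))$ are identified iff $a_i\mapsto a'_i$ extends to an isomorphism (and a tuple is identified with itself extended by the identity element). *)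

theory Defs
  imports "HOL-Algebra.Algebra" "HOL-Library.FuncSet"
begin

text \<open>Wreath product B wr H = B^H \<rtimes> H, elements (f,h) with f : carrier H \<rightarrow> carrier B
  (extensional), multiplication (f,h)(g,k) = (f * (h g h^-1), hk), where (h g h^-1)(x) = g(h^-1 x).\<close>
definition wreath :: "('b,'m1) monoid_scheme \<Rightarrow> ('h,'m2) monoid_scheme \<Rightarrow> (('h \<Rightarrow> 'b) \<times> 'h) monoid" where
  "wreath B H = \<lparr>carrier = (carrier H \<rightarrow>\<^sub>E carrier B) \<times> carrier H,
     monoid.mult = (\<lambda>(f,h) (g,k). ((\<lambda>x\<in>carrier H. f x \<otimes>\<^bsub>B\<^esub> g (inv\<^bsub>H\<^esub> h \<otimes>\<^bsub>H\<^esub> x)), h \<otimes>\<^bsub>H\<^esub> k)),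
     monoid.one = ((\<lambda>x\<in>carrier H. \<one>\<^bsub>B\<^esub>), \<one>\<^bsub>H\<^esub>)\<rparr>"

definition wr_top :: "('b,'m1) monoid_scheme \<Rightarrow> ('h,'m2) monoid_scheme \<Rightarrow> 'h \<Rightarrow> ('h \<Rightarrow> 'b) \<times> 'h" where
  "wr_top B H h = ((\<lambda>x\<in>carrier H. \<one>\<^bsub>B\<^esub>), h)"

definition abar :: "('b,'m1) monoid_scheme \<Rightarrow> ('h,'m2) monoid_scheme \<Rightarrow> 'b \<Rightarrow> ('h \<Rightarrow> 'b) \<times> 'h" where
  "abar B H a = ((\<lambda>x\<in>carrier H. if x = \<one>\<^bsub>H\<^esub> then a else \<one>\<^bsub>B\<^esub>), \<one>\<^bsub>H\<^esub>)"

definition bbar :: "('b,'m1) monoid_scheme \<Rightarrow> ('h,'m2) monoid_scheme \<Rightarrow> 'b \<Rightarrow> 'h set \<Rightarrow> ('h \<Rightarrow> 'b) \<times> 'h" where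
  "bbar B H b S = ((\<lambda>x\<in>carrier H. if x \<in> S then b else \<one>\<^bsub>B\<^esub>), \<one>\<^bsub>H\<^esub>)"

definition G_S :: "('b,'m1) monoid_scheme \<Rightarrow> ('h,'m2) monoid_scheme \<Rightarrow> 'b \<Rightarrow> 'b \<Rightarrow> 'h set \<Rightarrow> (('h \<Rightarrow> 'b) \<times> 'h) monoid" where
  "G_S B H a b S = (wreath B H)\<lparr>carrier := generate (wreath B H)
      (wr_top B H ` carrier H \<union> {abar B H a, bbar B H b S})\<rparr>"

definition Y_S :: "('b,'m1) monoid_scheme \<Rightarrow> ('h,'m2) monoid_scheme \<Rightarrow> 'h list \<Rightarrow> 'b \<Rightarrow> 'b \<Rightarrow> 'h set \<Rightarrow> (('h \<Rightarrow> 'b) \<times> 'h) list" where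
  "Y_S B H xs a b S = map (wr_top B H) xs @ [abar B H a, bbar B H b S]"

text \<open>Equality in the space of marked groups (for tuples of equal length):
  (G,A) and (G',A') are identified iff a_i \<mapsto> a'_i extends to an isomorphism.\<close>
definition marked_eq :: "('a,'m) monoid_scheme \<Rightarrow> 'a list \<Rightarrow> ('c,'n) monoid_scheme \<Rightarrow> 'c list \<Rightarrow> bool" where
  "marked_eq G A G' A' \<longleftrightarrow> length A = length A' \<and>
     (\<exists>\<phi> \<in> iso G G'. \<forall>i < length A. \<phi> (A ! i) = A' ! i)"

end

theory Submission
  imports Defs
begin

lemma wreath_mult: "(f,h) \<otimes>\<^bsub>wreath B H\<^esub> (g,k) = ((\<lambda>x\<in>carrier H. f x \<otimes>\<^bsub>B\<^esub> g (inv\<^bsub>H\<^esub> h \<otimes>\<^bsub>H\<^esub> x)), h \<otimes>\<^bsub>H\<^esub> k)"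
  by (simp add: wreath_def)

lemma wreath_one: "\<one>\<^bsub>wreath B H\<^esub> = ((\<lambda>x\<in>carrier H. \<one>\<^bsub>B\<^esub>), \<one>\<^bsub>H\<^esub>)"
  by (simp add: wreath_def)

lemma wreath_carrier: "carrier (wreath B H) = (carrier H \<rightarrow>\<^sub>E carrier B) \<times> carrier H"
  by (simp add: wreath_def)

lemma wreath_group:
  assumes GB: "group B" and GH: "group H"
  shows "group (wreath B H)"
proof (rule groupI)
  interpret B: group B by fact
  interpret H: group H by fact
  show "\<one>\<^bsub>wreath B H\<^esub> \<in> carrier (wreath B H)"
    by (auto simp: wreath_one wreath_carrier)
  fix x y assume x: "x \<in> carrier (wreath B H)" and y: "y \<in> carrier (wreath B H)"
  obtain f h where xe: "x = (f,h)" by (cases x)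
  obtain g k where ye: "y = (g,k)" by (cases y)
  show "x \<otimes>\<^bsub>wreath B H\<^esub> y \<in> carrier (wreath B H)"
    using x y by (auto simp: xe ye wreath_mult wreath_carrier PiE_iff)
next
  interpret B: group B by fact
  interpret H: group H by fact
  fix x y z assume x: "x \<in> carrier (wreath B H)" and y: "y \<in> carrier (wreath B H)"
    and z: "z \<in> carrier (wreath B H)"
  obtain f h where xe: "x = (f,h)" by (cases x)
  obtain g k where ye: "y = (g,k)" by (cases y)
  obtain l m where ze: "z = (l,m)" by (cases z)
  have f: "f \<in> carrier H \<rightarrow> carrier B" and h: "h \<in> carrier H" using x by (auto simp: xe wreath_carrier)
  have g: "g \<in> carrier H \<rightarrow> carrier B" and k: "k \<in> carrier H" using y by (auto simp: ye wreath_carrier)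
  have l: "l \<in> carrier H \<rightarrow> carrier B" and m: "m \<in> carrier H" using z by (auto simp: ze wreath_carrier)
  show "x \<otimes>\<^bsub>wreath B H\<^esub> y \<otimes>\<^bsub>wreath B H\<^esub> z = x \<otimes>\<^bsub>wreath B H\<^esub> (y \<otimes>\<^bsub>wreath B H\<^esub> z)"
    unfolding xe ye ze wreath_mult
  proof (simp, intro conjI ext)
    fix u
    show "(\<lambda>x\<in>carrier H. (if x \<in> carrier H then f x \<otimes>\<^bsub>B\<^esub> g (inv\<^bsub>H\<^esub> h \<otimes>\<^bsub>H\<^esub> x) else undefined) \<otimes>\<^bsub>B\<^esub> l (inv\<^bsub>H\<^esub> (h \<otimes>\<^bsub>H\<^esub> k) \<otimes>\<^bsub>H\<^esub> x)) u =
         (\<lambda>x\<in>carrier H. f x \<otimes>\<^bsub>B\<^esub> (if inv\<^bsub>H\<^esub> h \<otimes>\<^bsub>H\<^esub> x \<in> carrier H then g (inv\<^bsub>H\<^esub> h \<otimes>\<^bsub>H\<^esub> x) \<otimes>\<^bsub>B\<^esub> l (inv\<^bsub>H\<^esub> k \<otimes>\<^bsub>H\<^esub> (inv\<^bsub>H\<^esub> h \<otimes>\<^bsub>H\<^esub> x)) else undefined)) u"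
      using f g l h k m
      by (auto simp: H.inv_mult_group H.m_assoc B.m_assoc Pi_iff)
    show "h \<otimes>\<^bsub>H\<^esub> k \<otimes>\<^bsub>H\<^esub> m = h \<otimes>\<^bsub>H\<^esub> (k \<otimes>\<^bsub>H\<^esub> m)" using h k m by (simp add: H.m_assoc)
  qed
next
  interpret B: group B by fact
  interpret H: group H by fact
  fix x assume x: "x \<in> carrier (wreath B H)"
  obtain f h where xe: "x = (f,h)" by (cases x)
  have f: "f \<in> carrier H \<rightarrow>\<^sub>E carrier B" and h: "h \<in> carrier H" using x by (auto simp: xe wreath_carrier)
  show "\<one>\<^bsub>wreath B H\<^esub> \<otimes>\<^bsub>wreath B H\<^esub> x = x"
    unfolding xe wreath_one wreath_mult using f h
    by (auto simp: PiE_iff extensional_def intro!: ext)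
  let ?y = "((\<lambda>u\<in>carrier H. inv\<^bsub>B\<^esub> f (h \<otimes>\<^bsub>H\<^esub> u)), inv\<^bsub>H\<^esub> h)"
  have "?y \<in> carrier (wreath B H)" using f h by (auto simp: wreath_carrier PiE_iff)
  moreover have "?y \<otimes>\<^bsub>wreath B H\<^esub> x = \<one>\<^bsub>wreath B H\<^esub>"
    unfolding xe wreath_one wreath_mult using f h
    by (auto simp: PiE_iff H.m_assoc[symmetric] intro!: ext)
  ultimately show "\<exists>y\<in>carrier (wreath B H). y \<otimes>\<^bsub>wreath B H\<^esub> x = \<one>\<^bsub>wreath B H\<^esub>" by blast
qed


lemma wr_top_mult:
  assumes "group B" "group H" "h \<in> carrier H" "k \<in> carrier H"
  shows "wr_top B H h \<otimes>\<^bsub>wreath B H\<^esub> wr_top B H k = wr_top B H (h \<otimes>\<^bsub>H\<^esub> k)"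
proof -
  interpret B: group B by fact
  interpret H: group H by fact
  show ?thesis using assms by (auto simp: wr_top_def wreath_mult intro!: ext)
qed

lemma wr_top_carrier: "group B \<Longrightarrow> h \<in> carrier H \<Longrightarrow> wr_top B H h \<in> carrier (wreath B H)"
  by (auto simp: wr_top_def wreath_carrier group.is_monoid)

lemma abar_carrier: "group B \<Longrightarrow> group H \<Longrightarrow> a \<in> carrier B \<Longrightarrow> abar B H a \<in> carrier (wreath B H)"
  by (auto simp: abar_def wreath_carrier group.is_monoid)

lemma bbar_carrier: "group B \<Longrightarrow> group H \<Longrightarrow> b \<in> carrier B \<Longrightarrow> bbar B H b S \<in> carrier (wreath B H)"
  by (auto simp: bbar_def wreath_carrier group.is_monoid)

lemma conj_bbar:
  assumes GB: "group B" and GH: "group H" and h: "h \<in> carrier H" and b: "b \<in> carrier B"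
  shows "wr_top B H h \<otimes>\<^bsub>wreath B H\<^esub> bbar B H b S \<otimes>\<^bsub>wreath B H\<^esub> wr_top B H (inv\<^bsub>H\<^esub> h)
     = ((\<lambda>x\<in>carrier H. if inv\<^bsub>H\<^esub> h \<otimes>\<^bsub>H\<^esub> x \<in> S then b else \<one>\<^bsub>B\<^esub>), \<one>\<^bsub>H\<^esub>)"
proof -
  interpret B: group B by fact
  interpret H: group H by fact
  show ?thesis using h b
    by (auto simp: wr_top_def bbar_def wreath_mult intro!: ext)
qed

lemma comm_abar:
  assumes GB: "group B" and GH: "group H" and h: "h \<in> carrier H" and a: "a \<in> carrier B" and b: "b \<in> carrier B"
    and ab: "a \<otimes>\<^bsub>B\<^esub> b \<noteq> b \<otimes>\<^bsub>B\<^esub> a"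
  shows "(abar B H a \<otimes>\<^bsub>wreath B H\<^esub> ((\<lambda>x\<in>carrier H. if inv\<^bsub>H\<^esub> h \<otimes>\<^bsub>H\<^esub> x \<in> S then b else \<one>\<^bsub>B\<^esub>), \<one>\<^bsub>H\<^esub>)
     = ((\<lambda>x\<in>carrier H. if inv\<^bsub>H\<^esub> h \<otimes>\<^bsub>H\<^esub> x \<in> S then b else \<one>\<^bsub>B\<^esub>), \<one>\<^bsub>H\<^esub>) \<otimes>\<^bsub>wreath B H\<^esub> abar B H a)
    \<longleftrightarrow> inv\<^bsub>H\<^esub> h \<notin> S"
proof -
  interpret B: group B by fact
  interpret H: group H by fact
  let ?Y = "\<lambda>x. if inv\<^bsub>H\<^esub> h \<otimes>\<^bsub>H\<^esub> x \<in> S then b else \<one>\<^bsub>B\<^esub>"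
  let ?A = "\<lambda>x. if x = \<one>\<^bsub>H\<^esub> then a else \<one>\<^bsub>B\<^esub>"
  have eq: "(abar B H a \<otimes>\<^bsub>wreath B H\<^esub> (restrict ?Y (carrier H), \<one>\<^bsub>H\<^esub>)
     = (restrict ?Y (carrier H), \<one>\<^bsub>H\<^esub>) \<otimes>\<^bsub>wreath B H\<^esub> abar B H a) \<longleftrightarrow>
     (\<forall>x\<in>carrier H. ?A x \<otimes>\<^bsub>B\<^esub> ?Y x = ?Y x \<otimes>\<^bsub>B\<^esub> ?A x)"
    by (auto simp: abar_def wreath_mult restrict_def fun_eq_iff)
  show ?thesis
  proof
    assume L: "abar B H a \<otimes>\<^bsub>wreath B H\<^esub> (restrict ?Y (carrier H), \<one>\<^bsub>H\<^esub>)
     = (restrict ?Y (carrier H), \<one>\<^bsub>H\<^esub>) \<otimes>\<^bsub>wreath B H\<^esub> abar B H a"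
    have "?A \<one>\<^bsub>H\<^esub> \<otimes>\<^bsub>B\<^esub> ?Y \<one>\<^bsub>H\<^esub> = ?Y \<one>\<^bsub>H\<^esub> \<otimes>\<^bsub>B\<^esub> ?A \<one>\<^bsub>H\<^esub>"
      using L eq by blast
    then show "inv\<^bsub>H\<^esub> h \<notin> S" using ab h by (auto split: if_splits)
  next
    assume "inv\<^bsub>H\<^esub> h \<notin> S"
    then have "\<forall>x\<in>carrier H. ?A x \<otimes>\<^bsub>B\<^esub> ?Y x = ?Y x \<otimes>\<^bsub>B\<^esub> ?A x"
      using a b h by auto
    then show "abar B H a \<otimes>\<^bsub>wreath B H\<^esub> (restrict ?Y (carrier H), \<one>\<^bsub>H\<^esub>)
     = (restrict ?Y (carrier H), \<one>\<^bsub>H\<^esub>) \<otimes>\<^bsub>wreath B H\<^esub> abar B H a" using eq by blast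
  qed
qed


lemma G_S_facts:
  assumes GB: "group B" and GH: "group H" and a: "a \<in> carrier B" and b: "b \<in> carrier B"
  shows "group (G_S B H a b S)"
    and "\<And>h. h \<in> carrier H \<Longrightarrow> wr_top B H h \<in> carrier (G_S B H a b S)"
    and "abar B H a \<in> carrier (G_S B H a b S)"
    and "bbar B H b S \<in> carrier (G_S B H a b S)"
    and "\<And>x y. x \<otimes>\<^bsub>G_S B H a b S\<^esub> y = x \<otimes>\<^bsub>wreath B H\<^esub> y"
    and "\<one>\<^bsub>G_S B H a b S\<^esub> = \<one>\<^bsub>wreath B H\<^esub>"
    and "\<And>x. x \<in> carrier (G_S B H a b S) \<Longrightarrow> inv\<^bsub>G_S B H a b S\<^esub> x = inv\<^bsub>wreath B H\<^esub> x"
proof -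
  interpret W: group "wreath B H" using wreath_group[OF GB GH] .
  let ?gens = "wr_top B H ` carrier H \<union> {abar B H a, bbar B H b S}"
  have gs: "?gens \<subseteq> carrier (wreath B H)"
    using wr_top_carrier[OF GB] abar_carrier[OF GB GH a] bbar_carrier[OF GB GH b] by auto
  have sg: "subgroup (generate (wreath B H) ?gens) (wreath B H)"
    by (rule W.generate_is_subgroup[OF gs])
  show "group (G_S B H a b S)" unfolding G_S_def
    by (rule subgroup.subgroup_is_group[OF sg W.is_group])
  show "\<And>h. h \<in> carrier H \<Longrightarrow> wr_top B H h \<in> carrier (G_S B H a b S)"
    unfolding G_S_def by (auto intro: generate.incl)
  show "abar B H a \<in> carrier (G_S B H a b S)"
    unfolding G_S_def by (auto intro: generate.incl)
  show "bbar B H b S \<in> carrier (G_S B H a b S)"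
    unfolding G_S_def by (auto intro: generate.incl)
  show "\<And>x y. x \<otimes>\<^bsub>G_S B H a b S\<^esub> y = x \<otimes>\<^bsub>wreath B H\<^esub> y"
    by (simp add: G_S_def)
  show "\<one>\<^bsub>G_S B H a b S\<^esub> = \<one>\<^bsub>wreath B H\<^esub>"
    by (simp add: G_S_def)
  show "\<And>x. x \<in> carrier (G_S B H a b S) \<Longrightarrow> inv\<^bsub>G_S B H a b S\<^esub> x = inv\<^bsub>wreath B H\<^esub> x"
    unfolding G_S_def using W.m_inv_consistent[OF sg] by simp
qed

lemma wr_top_inv:
  assumes GB: "group B" and GH: "group H" and h: "h \<in> carrier H"
  shows "inv\<^bsub>wreath B H\<^esub> (wr_top B H h) = wr_top B H (inv\<^bsub>H\<^esub> h)"
proof -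
  interpret W: group "wreath B H" using wreath_group[OF GB GH] .
  interpret H: group H by fact
  have "wr_top B H (inv\<^bsub>H\<^esub> h) \<otimes>\<^bsub>wreath B H\<^esub> wr_top B H h = \<one>\<^bsub>wreath B H\<^esub>"
    using wr_top_mult[OF GB GH H.inv_closed[OF h] h] h by (simp add: wr_top_def wreath_one)
  then show ?thesis
    by (rule W.inv_equality[OF _ wr_top_carrier[OF GB h] wr_top_carrier[OF GB H.inv_closed[OF h]]])
qed

theorem lemma3p4:
  fixes B :: "('b,'m1) monoid_scheme" and H :: "('h,'m2) monoid_scheme"
    and xs :: "'h list" and a b :: 'b
  assumes "group B" and "group H"
    and "set xs \<subseteq> carrier H" and "generate H (set xs) = carrier H"
    and "infinite (carrier H)"
    and "a \<in> carrier B" and "b \<in> carrier B" and "a \<otimes>\<^bsub>B\<^esub> b \<noteq> b \<otimes>\<^bsub>B\<^esub> a"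
  shows "\<forall>S S'. S \<subseteq> carrier H \<longrightarrow> S' \<subseteq> carrier H \<longrightarrow>
           marked_eq (G_S B H a b S) (Y_S B H xs a b S) (G_S B H a b S') (Y_S B H xs a b S')
           \<longrightarrow> S = S'"
proof (intro allI impI)
  fix S S' assume SH: "S \<subseteq> carrier H" and S'H: "S' \<subseteq> carrier H"
    and me: "marked_eq (G_S B H a b S) (Y_S B H xs a b S) (G_S B H a b S') (Y_S B H xs a b S')"
  note GB = assms(1) and GH = assms(2) and a = assms(6) and b = assms(7) and ab = assms(8)
  interpret H: group H by fact
  interpret W: group "wreath B H" using wreath_group[OF GB GH] .
  let ?G = "G_S B H a b S" and ?G' = "G_S B H a b S'"
  note F = G_S_facts[OF GB GH a b, where S=S] and F' = G_S_facts[OF GB GH a b, where S=S']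
  interpret G: group ?G by (rule F(1))
  interpret G': group ?G' by (rule F'(1))
  obtain \<phi> where iso: "\<phi> \<in> iso ?G ?G'"
    and gen: "\<forall>i < length (Y_S B H xs a b S). \<phi> (Y_S B H xs a b S ! i) = Y_S B H xs a b S' ! i"
    using me unfolding marked_eq_def by blast
  have hom: "\<phi> \<in> hom ?G ?G'" and inj: "inj_on \<phi> (carrier ?G)"
    using iso by (auto simp: iso_def bij_betw_def)
  interpret gh: group_hom ?G ?G' \<phi>
    by (rule group_hom.intro[OF F(1) F'(1)]) (simp add: group_hom_axioms_def hom)
  have len: "length (Y_S B H xs a b S) = length xs + 2" by (simp add: Y_S_def)
  have phx: "\<phi> (wr_top B H x) = wr_top B H x" if "x \<in> set xs" for x
  proof -
    obtain i where i: "i < length xs" "x = xs ! i" using \<open>x \<in> set xs\<close> by (auto simp: in_set_conv_nth)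
    show ?thesis using gen[rule_format, of i] i len by (simp add: Y_S_def nth_append)
  qed
  have pha: "\<phi> (abar B H a) = abar B H a"
    using gen[rule_format, of "length xs"] len by (simp add: Y_S_def nth_append)
  have phb: "\<phi> (bbar B H b S) = bbar B H b S'"
    using gen[rule_format, of "Suc (length xs)"] len by (simp add: Y_S_def nth_append)
  have pht: "\<phi> (wr_top B H h) = wr_top B H h" if "h \<in> generate H (set xs)" for h
    using that
  proof (induction h rule: generate.induct)
    case one
    have "wr_top B H \<one>\<^bsub>H\<^esub> = \<one>\<^bsub>?G\<^esub>" by (simp add: F(6) wr_top_def wreath_one)
    moreover have "wr_top B H \<one>\<^bsub>H\<^esub> = \<one>\<^bsub>?G'\<^esub>" by (simp add: F'(6) wr_top_def wreath_one)
    ultimately show ?case by simp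
  next
    case (incl h) then show ?case by (rule phx)
  next
    case (inv h)
    have hH: "h \<in> carrier H" using inv assms(3) by auto
    have "wr_top B H (inv\<^bsub>H\<^esub> h) = inv\<^bsub>?G\<^esub> (wr_top B H h)"
      using F(7)[OF F(2)[OF hH]] wr_top_inv[OF GB GH hH] by simp
    moreover have "wr_top B H (inv\<^bsub>H\<^esub> h) = inv\<^bsub>?G'\<^esub> (wr_top B H h)"
      using F'(7)[OF F'(2)[OF hH]] wr_top_inv[OF GB GH hH] by simp
    ultimately show ?case using gh.hom_inv[OF F(2)[OF hH]] phx[OF inv] by simp
  next
    case (eng h1 h2)
    have h1: "h1 \<in> carrier H" and h2: "h2 \<in> carrier H" using eng assms(4) by auto
    have "wr_top B H (h1 \<otimes>\<^bsub>H\<^esub> h2) = wr_top B H h1 \<otimes>\<^bsub>?G\<^esub> wr_top B H h2"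
      using wr_top_mult[OF GB GH h1 h2] F(5) by simp
    moreover have "wr_top B H (h1 \<otimes>\<^bsub>H\<^esub> h2) = wr_top B H h1 \<otimes>\<^bsub>?G'\<^esub> wr_top B H h2"
      using wr_top_mult[OF GB GH h1 h2] F'(5) by simp
    ultimately show ?case using gh.hom_mult[OF F(2)[OF h1] F(2)[OF h2]] eng by simp
  qed
  have key: "inv\<^bsub>H\<^esub> h \<in> S \<longleftrightarrow> inv\<^bsub>H\<^esub> h \<in> S'" if hH: "h \<in> carrier H" for h
  proof -
    have hi: "inv\<^bsub>H\<^esub> h \<in> carrier H" using hH by simp
    define y where "y = wr_top B H h \<otimes>\<^bsub>?G\<^esub> bbar B H b S \<otimes>\<^bsub>?G\<^esub> wr_top B H (inv\<^bsub>H\<^esub> h)"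
    define y' where "y' = wr_top B H h \<otimes>\<^bsub>?G'\<^esub> bbar B H b S' \<otimes>\<^bsub>?G'\<^esub> wr_top B H (inv\<^bsub>H\<^esub> h)"
    have yc: "y \<in> carrier ?G" unfolding y_def using F(2)[OF hH] F(2)[OF hi] F(4) by simp
    have phy: "\<phi> y = y'" unfolding y_def y'_def
      using F(2)[OF hH] F(2)[OF hi] F(4) pht[of h] pht[of "inv\<^bsub>H\<^esub> h"] hH hi phb assms(4) by simp
    have ac: "abar B H a \<in> carrier ?G" by (rule F(3))
    have "(abar B H a \<otimes>\<^bsub>?G\<^esub> y = y \<otimes>\<^bsub>?G\<^esub> abar B H a) \<longleftrightarrow>
          (\<phi> (abar B H a \<otimes>\<^bsub>?G\<^esub> y) = \<phi> (y \<otimes>\<^bsub>?G\<^esub> abar B H a))"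
      using inj_onD[OF inj] G.m_closed[OF ac yc] G.m_closed[OF yc ac] by metis
    also have "\<dots> \<longleftrightarrow> (abar B H a \<otimes>\<^bsub>?G'\<^esub> y' = y' \<otimes>\<^bsub>?G'\<^esub> abar B H a)"
      using ac yc pha phy by simp
    finally have E: "(abar B H a \<otimes>\<^bsub>?G\<^esub> y = y \<otimes>\<^bsub>?G\<^esub> abar B H a) \<longleftrightarrow>
       (abar B H a \<otimes>\<^bsub>?G'\<^esub> y' = y' \<otimes>\<^bsub>?G'\<^esub> abar B H a)" .
    have e1: "(abar B H a \<otimes>\<^bsub>?G\<^esub> y = y \<otimes>\<^bsub>?G\<^esub> abar B H a) \<longleftrightarrow> inv\<^bsub>H\<^esub> h \<notin> S"
      unfolding y_def F(5) conj_bbar[OF GB GH hH b] using comm_abar[OF GB GH hH a b ab] by simp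
    have e2: "(abar B H a \<otimes>\<^bsub>?G'\<^esub> y' = y' \<otimes>\<^bsub>?G'\<^esub> abar B H a) \<longleftrightarrow> inv\<^bsub>H\<^esub> h \<notin> S'"
      unfolding y'_def F'(5) conj_bbar[OF GB GH hH b] using comm_abar[OF GB GH hH a b ab] by simp
    show ?thesis using E e1 e2 by blast
  qed
  have "x \<in> S \<longleftrightarrow> x \<in> S'" if xH: "x \<in> carrier H" for x
    using key[of "inv\<^bsub>H\<^esub> x"] xH by simp
  then show "S = S'" using SH S'H by blast
qed

end
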